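(* Let $A$ be an AUF algebra, let $M\in\mathrm{Coh}_{\mathrm L}(A)$, and let $B=\mathrm{End}_{A,-}(M)^{\mathrm{op}}$. Then for each generating idempotent $p\in B$, the map $$\mathrm{End}^0_{-,B}(M)\to\mathrm{End}^0_{-,pBp}(Mp),\qquad S\mapsto S|_{Mp}$$ is a well-defined linear isomorphism.
   Context: All algebras are associative $\mathbb C$-algebras, not necessarily unital. An idempotent is $e$ with $e^2=e$. An algebra $A$ is AUF if there is a family $(e_i)_{i\in\mathfrak I}$ of mutually orthogonal idempotents with $\dim e_iAe_j<\infty$ and $A=\sum_{i,j}e_iAe_j$. A left $A$-module $M$ is quasicoherent if $\xi\in A\xi$ for all $\xi\in M$, coherent if moreover finitely generated; $\mathrm{Coh}_{\mathrm L}(A)$ is the category of coherent left $A$-modules. $B=\mathrm{End}_{A,-}(M)^{\mathrm{op}}$ (a finite-dimensional unital algebra) acts on $M$ on the right by $\xi\cdot T=T(\xi)$; $Mp=\{\xi p:\xi\in M\}$ is a quasicoherent left $A$-submodule with a right $pBp$-action. Irreducible means nonzero with no nonzero proper submodules; for a finite-dimensional unital algebra $B$, an idempotent $p\in B$ is generating if every irreducible left $B$-module on which $1_B$ acts as identity is a quotient of $Bp$. For a quasicoherent left $A$-module $N$: $N^\vee$ is the space of linear functionals $\varphi$ on $N$ for which there is an idempotent $e\in A$ with $\varphi(e\eta)=\varphi(\eta)$ for all $\eta$; $\mathrm{End}^0(N)$ is the span in $\mathrm{End}(N)$ of the operators $\eta\mapsto\varphi(\eta)\xi$ with $\xi\in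 N,\varphi\in N^\vee$; if $N$ carries a right action of an algebra $C$ commuting with $A$, $\mathrm{End}^0_{-,C}(N)=\{T\in\mathrm{End}^0(N): T(\xi c)=T(\xi)c\ \forall \xi,c\}$. *)

theory Defs
  imports Complex_Main "HOL-Library.Function_Algebras"
begin

text \<open>The algebra A is the whole of a type 'a of class ring (associative, not
  necessarily unital), with complex scalar multiplication sA.  The module M is the
  whole of a type 'm, with complex scalar multiplication sM and left A-action act.\<close>

definition cx_algebra :: "(complex \<Rightarrow> 'a::ring \<Rightarrow> 'a) \<Rightarrow> bool" where
  "cx_algebra sA \<longleftrightarrow> vector_space sA \<and>
     (\<forall>c a b. sA c (a * b) = sA c a * b \<and> sA c (a * b) = a * sA c b)"

definition fin_dim_sub :: "(complex \<Rightarrow> 'b::ab_group_add \<Rightarrow> 'b) \<Rightarrow> 'b set \<Rightarrow> bool" where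
  "fin_dim_sub s S \<longleftrightarrow> (\<exists>F. finite F \<and> module.span s F = S)"

text \<open>AUF: a family of mutually orthogonal idempotents (written as a set E; repeated
  members of a family of mutually orthogonal idempotents are necessarily 0).\<close>
definition AUF :: "(complex \<Rightarrow> 'a::ring \<Rightarrow> 'a) \<Rightarrow> bool" where
  "AUF sA \<longleftrightarrow> (\<exists>E::'a set.
     (\<forall>e\<in>E. e * e = e) \<and>
     (\<forall>e\<in>E. \<forall>f\<in>E. e \<noteq> f \<longrightarrow> e * f = 0) \<and>
     (\<forall>e\<in>E. \<forall>f\<in>E. fin_dim_sub sA {e * a * f | a. True}) \<and>
     module.span sA (\<Union>e\<in>E. \<Union>f\<in>E. {e * a * f | a. True}) = UNIV)"

definition left_module ::
  "(complex \<Rightarrow> 'a::ring \<Rightarrow> 'a) \<Rightarrow> (complex \<Rightarrow> 'm::ab_group_add \<Rightarrow> 'm) \<Rightarrow> ('a \<Rightarrow> 'm \<Rightarrow> 'm) \<Rightarrow> bool" where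
  "left_module sA sM act \<longleftrightarrow> vector_space sM \<and>
     (\<forall>a b x. act (a + b) x = act a x + act b x) \<and>
     (\<forall>a x y. act a (x + y) = act a x + act a y) \<and>
     (\<forall>c a x. act (sA c a) x = sM c (act a x) \<and> act a (sM c x) = sM c (act a x)) \<and>
     (\<forall>a b x. act (a * b) x = act a (act b x))"

definition A_submodule ::
  "(complex \<Rightarrow> 'm::ab_group_add \<Rightarrow> 'm) \<Rightarrow> ('a \<Rightarrow> 'm \<Rightarrow> 'm) \<Rightarrow> 'm set \<Rightarrow> bool" where
  "A_submodule sM act N \<longleftrightarrow> module.subspace sM N \<and> (\<forall>a. \<forall>x\<in>N. act a x \<in> N)"

definition quasicoherent_on ::
  "('a \<Rightarrow> 'm \<Rightarrow> 'm) \<Rightarrow> 'm set \<Rightarrow> bool" where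
  "quasicoherent_on act N \<longleftrightarrow> (\<forall>\<xi>\<in>N. \<exists>a. act a \<xi> = \<xi>)"

definition coherent ::
  "(complex \<Rightarrow> 'm::ab_group_add \<Rightarrow> 'm) \<Rightarrow> ('a \<Rightarrow> 'm \<Rightarrow> 'm) \<Rightarrow> bool" where
  "coherent sM act \<longleftrightarrow> quasicoherent_on act UNIV \<and>
     (\<exists>F. finite F \<and> (\<forall>N. A_submodule sM act N \<and> F \<subseteq> N \<longrightarrow> N = UNIV))"

text \<open>B = End_{A,-}(M)^op, as a set of maps M -> M; the product b1 b2 in B is
  the composition b2 o b1, the unit is id, and the right action is xi . T = T xi.\<close>
definition Bset ::
  "(complex \<Rightarrow> 'm::ab_group_add \<Rightarrow> 'm) \<Rightarrow> ('a \<Rightarrow> 'm \<Rightarrow> 'm) \<Rightarrow> ('m \<Rightarrow> 'm) set" where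
  "Bset sM act = {T. (\<forall>x y. T (x + y) = T x + T y) \<and> (\<forall>c x. T (sM c x) = sM c (T x)) \<and>
                     (\<forall>a x. T (act a x) = act a (T x))}"

definition sF :: "(complex \<Rightarrow> 'm \<Rightarrow> 'm) \<Rightarrow> complex \<Rightarrow> ('x \<Rightarrow> 'm) \<Rightarrow> ('x \<Rightarrow> 'm)" where
  "sF sM c T = (\<lambda>x. sM c (T x))"

text \<open>pBp = \{p b p\}; since the product in B is reversed composition, p b p is p o b o p.\<close>
definition pBp ::
  "(complex \<Rightarrow> 'm::ab_group_add \<Rightarrow> 'm) \<Rightarrow> ('a \<Rightarrow> 'm \<Rightarrow> 'm) \<Rightarrow> ('m \<Rightarrow> 'm) \<Rightarrow> ('m \<Rightarrow> 'm) set" where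
  "pBp sM act p = {p \<circ> b \<circ> p | b. b \<in> Bset sM act}"

text \<open>Unital left B-module structure (B a set of maps with the reversed-composition
  product, unit id, pointwise linear structure) on a subspace V of a complex vector
  space 'v with scalar multiplication sV and action beta.\<close>
definition B_lmodule ::
  "('m \<Rightarrow> 'm) set \<Rightarrow> (complex \<Rightarrow> 'm::ab_group_add \<Rightarrow> 'm) \<Rightarrow>
   (complex \<Rightarrow> 'v::ab_group_add \<Rightarrow> 'v) \<Rightarrow> 'v set \<Rightarrow> (('m \<Rightarrow> 'm) \<Rightarrow> 'v \<Rightarrow> 'v) \<Rightarrow> bool" where
  "B_lmodule B sM sV V \<beta> \<longleftrightarrow> vector_space sV \<and> module.subspace sV V \<and>
     (\<forall>b\<in>B. \<forall>v\<in>V. \<beta> b v \<in> V) \<and>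
     (\<forall>b1\<in>B. \<forall>b2\<in>B. \<forall>v\<in>V. \<beta> (b1 + b2) v = \<beta> b1 v + \<beta> b2 v) \<and>
     (\<forall>c. \<forall>b\<in>B. \<forall>v\<in>V. \<beta> (sF sM c b) v = sV c (\<beta> b v)) \<and>
     (\<forall>b\<in>B. \<forall>v\<in>V. \<forall>w\<in>V. \<beta> b (v + w) = \<beta> b v + \<beta> b w) \<and>
     (\<forall>c. \<forall>b\<in>B. \<forall>v\<in>V. \<beta> b (sV c v) = sV c (\<beta> b v)) \<and>
     (\<forall>b1\<in>B. \<forall>b2\<in>B. \<forall>v\<in>V. \<beta> (b2 \<circ> b1) v = \<beta> b1 (\<beta> b2 v)) \<and>
     (\<forall>v\<in>V. \<beta> id v = v)"

definition B_irreducible ::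
  "('m \<Rightarrow> 'm) set \<Rightarrow> (complex \<Rightarrow> 'v::ab_group_add \<Rightarrow> 'v) \<Rightarrow> 'v set \<Rightarrow> (('m \<Rightarrow> 'm) \<Rightarrow> 'v \<Rightarrow> 'v) \<Rightarrow> bool" where
  "B_irreducible B sV V \<beta> \<longleftrightarrow> V \<noteq> {0} \<and>
     (\<forall>W. W \<subseteq> V \<and> module.subspace sV W \<and> (\<forall>b\<in>B. \<forall>w\<in>W. \<beta> b w \<in> W)
          \<longrightarrow> W = {0} \<or> W = V)"

text \<open>V is a quotient of the left B-module Bp = \{b p\} = \{p o b\}, on which
  b' acts by x |-> b' x = x o b'.\<close>
definition quotient_of_Bp ::
  "('m \<Rightarrow> 'm) set \<Rightarrow> (complex \<Rightarrow> 'm::ab_group_add \<Rightarrow> 'm) \<Rightarrow> ('m \<Rightarrow> 'm) \<Rightarrow>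
   (complex \<Rightarrow> 'v::ab_group_add \<Rightarrow> 'v) \<Rightarrow> 'v set \<Rightarrow> (('m \<Rightarrow> 'm) \<Rightarrow> 'v \<Rightarrow> 'v) \<Rightarrow> bool" where
  "quotient_of_Bp B sM p sV V \<beta> \<longleftrightarrow>
     (\<exists>f. (\<forall>x\<in>{p \<circ> b | b. b \<in> B}. \<forall>y\<in>{p \<circ> b | b. b \<in> B}. f (x + y) = f x + f y) \<and>
          (\<forall>c. \<forall>x\<in>{p \<circ> b | b. b \<in> B}. f (sF sM c x) = sV c (f x)) \<and>
          (\<forall>b'\<in>B. \<forall>x\<in>{p \<circ> b | b. b \<in> B}. f (x \<circ> b') = \<beta> b' (f x)) \<and>
          f ` {p \<circ> b | b. b \<in> B} = V)"

text \<open>Test modules live in subspaces of the complex vector space nat => complex;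
  every irreducible unital module over the finite-dimensional algebra B is
  finite-dimensional and hence isomorphic to such a one.\<close>
definition sV :: "complex \<Rightarrow> (nat \<Rightarrow> complex) \<Rightarrow> (nat \<Rightarrow> complex)" where
  "sV c v = (\<lambda>n. c * v n)"

definition generating ::
  "(complex \<Rightarrow> 'm::ab_group_add \<Rightarrow> 'm) \<Rightarrow> ('a \<Rightarrow> 'm \<Rightarrow> 'm) \<Rightarrow> ('m \<Rightarrow> 'm) \<Rightarrow> bool" where
  "generating sM act p \<longleftrightarrow>
     (\<forall>(V::(nat \<Rightarrow> complex) set) \<beta>.
        B_lmodule (Bset sM act) sM sV V \<beta> \<and> B_irreducible (Bset sM act) sV V \<beta>
        \<longrightarrow> quotient_of_Bp (Bset sM act) sM p sV V \<beta>)"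

definition dual_on ::
  "(complex \<Rightarrow> 'm::ab_group_add \<Rightarrow> 'm) \<Rightarrow> ('a::ring \<Rightarrow> 'm \<Rightarrow> 'm) \<Rightarrow> 'm set \<Rightarrow> ('m \<Rightarrow> complex) set" where
  "dual_on sM act N = {\<phi>. (\<forall>x\<in>N. \<forall>y\<in>N. \<phi> (x + y) = \<phi> x + \<phi> y) \<and>
       (\<forall>c. \<forall>x\<in>N. \<phi> (sM c x) = c * \<phi> x) \<and>
       (\<exists>e. e * e = e \<and> (\<forall>\<eta>\<in>N. \<phi> (act e \<eta>) = \<phi> \<eta>))}"

text \<open>Operators on N are represented as maps 'm => 'm vanishing outside N.\<close>
definition rank1_on :: "(complex \<Rightarrow> 'm::ab_group_add \<Rightarrow> 'm) \<Rightarrow> 'm set \<Rightarrow> ('m \<Rightarrow> complex) \<Rightarrow> 'm \<Rightarrow> ('m \<Rightarrow> 'm)" where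
  "rank1_on sM N \<phi> \<xi> = (\<lambda>\<eta>. if \<eta> \<in> N then sM (\<phi> \<eta>) \<xi> else 0)"

definition End0 ::
  "(complex \<Rightarrow> 'm::ab_group_add \<Rightarrow> 'm) \<Rightarrow> ('a::ring \<Rightarrow> 'm \<Rightarrow> 'm) \<Rightarrow> 'm set \<Rightarrow> ('m \<Rightarrow> 'm) set" where
  "End0 sM act N = module.span (sF sM)
     {rank1_on sM N \<phi> \<xi> | \<phi> \<xi>. \<phi> \<in> dual_on sM act N \<and> \<xi> \<in> N}"

text \<open>End^0_{-,C}(N) where C is a set of maps acting on the right of N by xi . c = c xi.\<close>
definition End0_C ::
  "(complex \<Rightarrow> 'm::ab_group_add \<Rightarrow> 'm) \<Rightarrow> ('a::ring \<Rightarrow> 'm \<Rightarrow> 'm) \<Rightarrow> 'm set \<Rightarrow> ('m \<Rightarrow> 'm) set \<Rightarrow> ('m \<Rightarrow> 'm) set" where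
  "End0_C sM act N C = {T \<in> End0 sM act N. \<forall>\<xi>\<in>N. \<forall>c\<in>C. T (c \<xi>) = c (T \<xi>)}"

definition restrict_to :: "'m set \<Rightarrow> ('m \<Rightarrow> 'm::zero) \<Rightarrow> ('m \<Rightarrow> 'm)" where
  "restrict_to N S = (\<lambda>x. if x \<in> N then S x else 0)"

end

theory Submission
  imports Defs
begin


lemma vs_sF: "vector_space sM \<Longrightarrow> vector_space (sF sM)"
  unfolding vector_space_def sF_def
  by (auto simp: fun_eq_iff)

lemma sum_fun_apply: "(sum f S) x = (\<Sum>i\<in>S. f i x)"
  by (induction S rule: infinite_finite_induct) auto

locale vsM =
  fixes sA :: "complex \<Rightarrow> 'a::ring \<Rightarrow> 'a" and sM :: "complex \<Rightarrow> 'm::ab_group_add \<Rightarrow> 'm" and act :: "'a \<Rightarrow> 'm \<Rightarrow> 'm"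
  assumes lm: "left_module sA sM act"
begin

lemma vsM: "vector_space sM" using lm by (simp add: left_module_def)
lemma act_add: "act a (x + y) = act a x + act a y" using lm by (simp add: left_module_def)
lemma act_add2: "act (a + b) x = act a x + act b x" using lm by (simp add: left_module_def)
lemma act_sc: "act a (sM c x) = sM c (act a x)" using lm by (simp add: left_module_def)
lemma act_sc2: "act (sA c a) x = sM c (act a x)" using lm by (simp add: left_module_def)
lemma act_mult: "act (a * b) x = act a (act b x)" using lm by (simp add: left_module_def)
lemma act_0[simp]: "act a 0 = 0" using act_add[of a 0 0] by simp
lemma act_0'[simp]: "act 0 x = 0" using act_add2[of 0 0 x] by simp

sublocale M: vector_space sM by (rule vsM)
sublocale FS: vector_space "sF sM :: complex \<Rightarrow> ('m \<Rightarrow> 'm) \<Rightarrow> ('m \<Rightarrow> 'm)" by (rule vs_sF[OF vsM])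

lemma sF_apply[simp]: "sF sM c T x = sM c (T x)" by (simp add: sF_def)

lemma span_map:
  fixes \<Psi> :: "('m \<Rightarrow> 'm) \<Rightarrow> ('m \<Rightarrow> 'm)"
  assumes T: "T \<in> FS.span S"
    and add: "\<And>x y. \<Psi> (x + y) = \<Psi> x + \<Psi> y"
    and sc: "\<And>c x. \<Psi> (sF sM c x) = sF sM c (\<Psi> x)"
    and z: "\<Psi> 0 = 0"
    and gen: "\<And>x. x \<in> S \<Longrightarrow> \<Psi> x \<in> FS.span S'"
  shows "\<Psi> T \<in> FS.span S'"
  using T
proof (induction rule: FS.span_induct_alt)
  case base then show ?case by (metis z FS.span_zero)
next
  case (step c x y)
  have "\<Psi> (sF sM c x + y) = sF sM c (\<Psi> x) + \<Psi> y" by (simp only: add sc)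
  then show ?case using step FS.span_add FS.span_scale gen by metis
qed

lemma B_add: "b \<in> Bset sM act \<Longrightarrow> b (x + y) = b x + b y" by (simp add: Bset_def)
lemma B_sc: "b \<in> Bset sM act \<Longrightarrow> b (sM c x) = sM c (b x)" by (simp add: Bset_def)
lemma B_act: "b \<in> Bset sM act \<Longrightarrow> b (act a x) = act a (b x)" by (simp add: Bset_def)
lemma B_0: "b \<in> Bset sM act \<Longrightarrow> b 0 = 0" using B_add[of b 0 0] by simp
lemma B_sum: "b \<in> Bset sM act \<Longrightarrow> b (sum f S) = (\<Sum>i\<in>S. b (f i))"
  using sum_comp_morphism[of b f S] B_0 B_add by (metis comp_apply sum.cong)

lemma Bset_comp: "b \<in> Bset sM act \<Longrightarrow> c \<in> Bset sM act \<Longrightarrow> b \<circ> c \<in> Bset sM act"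
  by (auto simp: Bset_def)

lemma Bset_id: "id \<in> Bset sM act"
  by (auto simp: Bset_def)

lemma Bset_subspace: "FS.subspace (Bset sM act)"
  unfolding FS.subspace_def
  by (auto simp: Bset_def M.scale_right_distrib M.scale_scale mult.commute act_add act_sc)

lemma Bset_add: "b \<in> Bset sM act \<Longrightarrow> c \<in> Bset sM act \<Longrightarrow> b + c \<in> Bset sM act"
  using Bset_subspace FS.subspace_add by blast
lemma Bset_scale: "b \<in> Bset sM act \<Longrightarrow> sF sM t b \<in> Bset sM act"
  using Bset_subspace FS.subspace_scale by blast

lemma End0_props:
  assumes T: "T \<in> End0 sM act N" and N: "M.subspace N"
  shows "(\<forall>x\<in>N. \<forall>y\<in>N. T (x + y) = T x + T y) \<and> (\<forall>c. \<forall>x\<in>N. T (sM c x) = sM c (T x))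
     \<and> (\<forall>x. x \<notin> N \<longrightarrow> T x = 0)"
  using T unfolding End0_def
proof (induction rule: FS.span_induct_alt)
  case base
  then show ?case by simp
next
  case (step c x y)
  then obtain \<phi> \<xi> where x: "x = rank1_on sM N \<phi> \<xi>" "\<phi> \<in> dual_on sM act N" "\<xi> \<in> N" by blast
  have xa: "x (u + v) = x u + x v" if "u \<in> N" "v \<in> N" for u v
  proof -
    have "u + v \<in> N" using that N M.subspace_add by blast
    moreover have "\<phi> (u + v) = \<phi> u + \<phi> v" using x(2) that by (simp add: dual_on_def)
    ultimately show ?thesis using that x(1) by (simp add: rank1_on_def M.scale_left_distrib)
  qed
  have xs: "x (sM d u) = sM d (x u)" if "u \<in> N" for d u
  proof -
    have "sM d u \<in> N" using that N M.subspace_scale by blast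
    moreover have "\<phi> (sM d u) = d * \<phi> u" using x(2) that by (simp add: dual_on_def)
    ultimately show ?thesis using that x(1) by (simp add: rank1_on_def M.scale_scale)
  qed
  have xz: "x u = 0" if "u \<notin> N" for u
    using x that by (auto simp: rank1_on_def)
  have z: "(sF sM c x + y) u = sM c (x u) + y u" for u by simp
  show ?case
  proof (intro conjI ballI allI impI)
    fix u v assume uv: "u \<in> N" "v \<in> N"
    then have "y (u + v) = y u + y v" using step.IH by blast
    then show "(sF sM c x + y) (u + v) = (sF sM c x + y) u + (sF sM c x + y) v"
      unfolding z using xa[OF uv] by (simp add: M.scale_right_distrib algebra_simps)
  next
    fix d u assume u: "u \<in> N"
    then have "y (sM d u) = sM d (y u)" using step.IH by blast
    then show "(sF sM c x + y) (sM d u) = sM d ((sF sM c x + y) u)"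
      unfolding z using xs[OF u] by (simp add: M.scale_right_distrib M.scale_left_commute[of c d])
  next
    fix u assume u: "u \<notin> N"
    then have "y u = 0" using step.IH by blast
    then show "(sF sM c x + y) u = 0" unfolding z using xz[OF u] by simp
  qed
qed

end

locale partA = vsM sA sM act
  for sA :: "complex \<Rightarrow> 'a::ring \<Rightarrow> 'a" and sM :: "complex \<Rightarrow> 'm::ab_group_add \<Rightarrow> 'm" and act :: "'a \<Rightarrow> 'm \<Rightarrow> 'm" +
  fixes p :: "'m \<Rightarrow> 'm" and K :: "'k set" and bk ck :: "'k \<Rightarrow> 'm \<Rightarrow> 'm"
  assumes pB: "p \<in> Bset sM act" and pp: "p \<circ> p = p"
    and Kfin: "finite K" and bkB: "\<And>k. bk k \<in> Bset sM act" and ckB: "\<And>k. ck k \<in> Bset sM act"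
    and dec: "\<And>\<xi>. (\<Sum>k\<in>K. ck k (p (bk k \<xi>))) = \<xi>"
begin

abbreviation "N \<equiv> range p"
abbreviation "BB \<equiv> Bset sM act"

lemma ppx[simp]: "p (p x) = p x" using pp by (metis comp_apply)

lemma N_sub: "M.subspace N"
  unfolding M.subspace_def
proof (intro conjI ballI allI)
  show "0 \<in> N" using B_0[OF pB] by (metis rangeI)
  fix x y assume "x \<in> N" "y \<in> N"
  then obtain u v where "x = p u" "y = p v" by blast
  then have "x + y = p (u + v)" using B_add[OF pB] by simp
  then show "x + y \<in> N" by simp
next
  fix c x assume "x \<in> N"
  then obtain u where "x = p u" by blast
  then have "sM c x = p (sM c u)" using B_sc[OF pB] by simp
  then show "sM c x \<in> N" by simp
qed

lemma pN: "x \<in> N \<Longrightarrow> p x = x" by auto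

lemma pBp_B: "c \<in> pBp sM act p \<Longrightarrow> c \<in> BB"
  using pB by (auto simp: pBp_def intro!: Bset_comp)

lemma pBp_in: "b \<in> BB \<Longrightarrow> p \<circ> b \<circ> p \<in> pBp sM act p"
  by (auto simp: pBp_def)


lemma End0C_comm: "S \<in> End0_C sM act NN C \<Longrightarrow> \<xi> \<in> NN \<Longrightarrow> c \<in> C \<Longrightarrow> S (c \<xi>) = c (S \<xi>)"
  by (simp add: End0_C_def)

lemma End0C_End0: "S \<in> End0_C sM act NN C \<Longrightarrow> S \<in> End0 sM act NN"
  by (simp add: End0_C_def)

lemma dbl0: "(a::'b::ab_group_add) = a + a \<Longrightarrow> a = 0"
  by (simp add: add.commute)

lemma add_sum:
  fixes T :: "'m \<Rightarrow> 'm"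
  assumes "\<And>x y. x \<in> V \<Longrightarrow> y \<in> V \<Longrightarrow> T (x + y) = T x + T y" "M.subspace V"
    and "\<And>j. j \<in> J \<Longrightarrow> v j \<in> V" and "finite J"
  shows "T (\<Sum>j\<in>J. v j) = (\<Sum>j\<in>J. T (v j))"
  using assms(4,3)
proof (induction J rule: finite_induct)
  case empty
  have "T 0 = T 0 + T 0" using assms(1)[of 0 0] M.subspace_0[OF assms(2)] by simp
  then have "T 0 = 0" by (rule dbl0)
  then show ?case by simp
next
  case (insert x F)
  have "(\<Sum>j\<in>F. v j) \<in> V" using insert M.subspace_sum[OF assms(2)] by blast
  then show ?case using insert assms(1) by simp
qed

lemma S_props:
  assumes "S \<in> End0_C sM act UNIV BB"
  shows "S (x + y) = S x + S y" "S (sM c x) = sM c (S x)"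
  using End0_props[OF End0C_End0[OF assms] M.subspace_UNIV] by auto

lemma S_comm: "S \<in> End0_C sM act UNIV BB \<Longrightarrow> b \<in> BB \<Longrightarrow> S (b x) = b (S x)"
  using End0C_comm by blast

lemma S_sum:
  assumes "S \<in> End0_C sM act UNIV BB" "finite J"
  shows "S (\<Sum>j\<in>J. v j) = (\<Sum>j\<in>J. S (v j))"
  by (rule add_sum[OF _ M.subspace_UNIV]) (use S_props(1)[OF assms(1)] assms(2) in auto)

lemma restr_in:
  assumes S: "S \<in> End0_C sM act UNIV BB"
  shows "restrict_to N S \<in> End0_C sM act N (pBp sM act p)"
proof -
  define \<Theta> where "\<Theta> = (\<lambda>S::'m\<Rightarrow>'m. \<lambda>x. if x \<in> N then p (S x) else 0)"
  have eq: "restrict_to N S = \<Theta> S"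
  proof
    fix x show "restrict_to N S x = \<Theta> S x"
    proof (cases "x \<in> N")
      case True
      then have "S x = S (p x)" by auto
      also have "\<dots> = p (S x)" using S_comm[OF S pB] .
      finally show ?thesis using True by (simp add: restrict_to_def \<Theta>_def)
    qed (simp add: restrict_to_def \<Theta>_def)
  qed
  have "\<Theta> S \<in> End0 sM act N"
    unfolding End0_def
  proof (rule span_map[where \<Psi>=\<Theta>])
    show "S \<in> FS.span {rank1_on sM UNIV \<phi> \<xi> |\<phi> \<xi>. \<phi> \<in> dual_on sM act UNIV \<and> \<xi> \<in> UNIV}"
      using End0C_End0[OF S] by (simp add: End0_def)
    show "\<Theta> (x + y) = \<Theta> x + \<Theta> y" for x y
      by (auto simp: \<Theta>_def fun_eq_iff B_add[OF pB])
    show "\<Theta> (sF sM c x) = sF sM c (\<Theta> x)" for c x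
      by (auto simp: \<Theta>_def fun_eq_iff B_sc[OF pB])
    show "\<Theta> 0 = 0" by (auto simp: \<Theta>_def fun_eq_iff B_0[OF pB])
    fix x assume "x \<in> {rank1_on sM UNIV \<phi> \<xi> |\<phi> \<xi>. \<phi> \<in> dual_on sM act UNIV \<and> \<xi> \<in> UNIV}"
    then obtain \<phi> \<xi> where x: "x = rank1_on sM UNIV \<phi> \<xi>" "\<phi> \<in> dual_on sM act UNIV" by blast
    have "\<phi> \<in> dual_on sM act N" using x(2) by (auto simp: dual_on_def)
    moreover have "\<Theta> x = rank1_on sM N \<phi> (p \<xi>)"
      by (auto simp: x \<Theta>_def rank1_on_def fun_eq_iff B_sc[OF pB])
    ultimately show "\<Theta> x \<in> FS.span {rank1_on sM N \<phi> \<xi> |\<phi> \<xi>. \<phi> \<in> dual_on sM act N \<and> \<xi> \<in> N}"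
      by (intro FS.span_base) blast
  qed
  moreover have "\<forall>\<xi>\<in>N. \<forall>c\<in>pBp sM act p. restrict_to N S (c \<xi>) = c (restrict_to N S \<xi>)"
  proof (intro ballI)
    fix \<xi> c assume \<xi>: "\<xi> \<in> N" and c: "c \<in> pBp sM act p"
    then obtain b where b: "c = p \<circ> b \<circ> p" by (auto simp: pBp_def)
    have "c \<xi> \<in> N" using b by auto
    then show "restrict_to N S (c \<xi>) = c (restrict_to N S \<xi>)"
      using \<xi> S_comm[OF S pBp_B[OF c]] by (simp add: restrict_to_def)
  qed
  ultimately show ?thesis using eq by (simp add: End0_C_def)
qed

lemma restr_inj: "inj_on (restrict_to N) (End0_C sM act UNIV BB)"
proof (rule inj_onI)
  fix S1 S2 assume S1: "S1 \<in> End0_C sM act UNIV BB" and S2: "S2 \<in> End0_C sM act UNIV BB"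
    and eq: "restrict_to N S1 = restrict_to N S2"
  have e: "S1 (p x) = S2 (p x)" for x
    using fun_cong[OF eq, of "p x"] by (simp add: restrict_to_def)
  show "S1 = S2"
  proof
    fix \<xi>
    have "S1 \<xi> = S1 (\<Sum>k\<in>K. ck k (p (bk k \<xi>)))" by (simp add: dec)
    also have "\<dots> = (\<Sum>k\<in>K. ck k (S1 (p (bk k \<xi>))))"
      by (simp only: S_sum[OF S1 Kfin] S_comm[OF S1 ckB])
    also have "\<dots> = (\<Sum>k\<in>K. ck k (S2 (p (bk k \<xi>))))" using e by simp
    also have "\<dots> = S2 (\<Sum>k\<in>K. ck k (p (bk k \<xi>)))"
      by (simp only: S_sum[OF S2 Kfin] S_comm[OF S2 ckB])
    finally show "S1 \<xi> = S2 \<xi>" by (simp add: dec)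
  qed
qed


lemma restr_surj:
  assumes T: "T \<in> End0_C sM act N (pBp sM act p)"
  shows "\<exists>S\<in>End0_C sM act UNIV BB. restrict_to N S = T"
proof -
  have T0: "T \<in> End0 sM act N" using End0C_End0[OF T] .
  have Tp: "(\<forall>x\<in>N. \<forall>y\<in>N. T (x + y) = T x + T y) \<and> (\<forall>c. \<forall>x\<in>N. T (sM c x) = sM c (T x))
     \<and> (\<forall>x. x \<notin> N \<longrightarrow> T x = 0)" using End0_props[OF T0 N_sub] .
  have Tc: "T (c \<eta>) = c (T \<eta>)" if "\<eta> \<in> N" "c \<in> pBp sM act p" for \<eta> c
    using End0C_comm[OF T that] .
  have TpN: "p (T \<eta>) = T \<eta>" if "\<eta> \<in> N" for \<eta>
  proof -
    have "T ((p \<circ> id \<circ> p) \<eta>) = (p \<circ> id \<circ> p) (T \<eta>)"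
      using Tc[OF that pBp_in[OF Bset_id]] .
    then show ?thesis using that by auto
  qed
  have Tsum: "T (\<Sum>j\<in>J. v j) = (\<Sum>j\<in>J. T (v j))" if "\<And>j. j \<in> J \<Longrightarrow> v j \<in> N" "finite J" for J v
    by (rule add_sum[OF _ N_sub that]) (use Tp in auto)
  define \<Psi> where "\<Psi> = (\<lambda>k (T'::'m\<Rightarrow>'m) \<xi>. ck k (T' (p (bk k \<xi>))))"
  define S where "S = (\<Sum>k\<in>K. \<Psi> k T)"
  have Sx: "S \<xi> = (\<Sum>k\<in>K. ck k (T (p (bk k \<xi>))))" for \<xi>
    by (simp add: S_def sum_fun_apply \<Psi>_def)
  have SE: "S \<in> End0 sM act UNIV"
    unfolding S_def End0_def
  proof (rule FS.span_sum)
    fix k assume "k \<in> K"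
    show "\<Psi> k T \<in> FS.span {rank1_on sM UNIV \<phi> \<xi> |\<phi> \<xi>. \<phi> \<in> dual_on sM act UNIV \<and> \<xi> \<in> UNIV}"
    proof (rule span_map[where \<Psi>="\<Psi> k"])
      show "T \<in> FS.span {rank1_on sM N \<phi> \<xi> |\<phi> \<xi>. \<phi> \<in> dual_on sM act N \<and> \<xi> \<in> N}"
        using T0 by (simp add: End0_def)
      show "\<Psi> k (x + y) = \<Psi> k x + \<Psi> k y" for x y
        by (auto simp: \<Psi>_def fun_eq_iff B_add[OF ckB])
      show "\<Psi> k (sF sM c x) = sF sM c (\<Psi> k x)" for c x
        by (auto simp: \<Psi>_def fun_eq_iff B_sc[OF ckB])
      show "\<Psi> k 0 = 0" by (auto simp: \<Psi>_def fun_eq_iff B_0[OF ckB])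
      fix x assume "x \<in> {rank1_on sM N \<phi> \<xi> |\<phi> \<xi>. \<phi> \<in> dual_on sM act N \<and> \<xi> \<in> N}"
      then obtain \<phi> \<xi> where x: "x = rank1_on sM N \<phi> \<xi>" "\<phi> \<in> dual_on sM act N" by blast
      define \<phi>' where "\<phi>' = (\<lambda>\<eta>. \<phi> (p (bk k \<eta>)))"
      have "\<phi>' \<in> dual_on sM act UNIV"
      proof -
        have a: "\<phi>' (u + v) = \<phi>' u + \<phi>' v" for u v
          using x(2) by (simp add: \<phi>'_def dual_on_def B_add[OF bkB] B_add[OF pB])
        have b: "\<phi>' (sM c u) = c * \<phi>' u" for c u
          using x(2) by (simp add: \<phi>'_def dual_on_def B_sc[OF bkB] B_sc[OF pB])
        obtain e where e: "e * e = e" "\<forall>\<eta>\<in>N. \<phi> (act e \<eta>) = \<phi> \<eta>"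
          using x(2) by (auto simp: dual_on_def)
        have c: "\<phi>' (act e \<eta>) = \<phi>' \<eta>" for \<eta>
          using e(2) by (simp add: \<phi>'_def B_act[OF bkB] B_act[OF pB])
        show ?thesis using a b c e(1) by (auto simp: dual_on_def)
      qed
      moreover have "\<Psi> k x = rank1_on sM UNIV \<phi>' (ck k \<xi>)"
        by (auto simp: x \<Psi>_def \<phi>'_def rank1_on_def fun_eq_iff B_sc[OF ckB])
      ultimately show "\<Psi> k x \<in> FS.span {rank1_on sM UNIV \<phi> \<xi> |\<phi> \<xi>. \<phi> \<in> dual_on sM act UNIV \<and> \<xi> \<in> UNIV}"
        by (intro FS.span_base) blast
    qed
  qed
  have Scomm: "S (d \<xi>) = d (S \<xi>)" if d: "d \<in> BB" for d \<xi>
  proof -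
    define \<eta> where "\<eta> = (\<lambda>j. p (bk j \<xi>))"
    have \<eta>N: "\<eta> j \<in> N" for j by (simp add: \<eta>_def)
    have "S (d \<xi>) = (\<Sum>k\<in>K. ck k (T (p (bk k (d (\<Sum>j\<in>K. ck j (\<eta> j)))))))"
      by (simp add: Sx dec \<eta>_def)
    also have "\<dots> = (\<Sum>k\<in>K. ck k (T (\<Sum>j\<in>K. (p \<circ> (bk k \<circ> d \<circ> ck j) \<circ> p) (\<eta> j))))"
      by (simp add: B_sum[OF d] B_sum[OF bkB] B_sum[OF pB] pN[OF \<eta>N])
    also have "\<dots> = (\<Sum>k\<in>K. ck k (\<Sum>j\<in>K. (p \<circ> (bk k \<circ> d \<circ> ck j) \<circ> p) (T (\<eta> j))))"
    proof -
      have "T (\<Sum>j\<in>K. (p \<circ> (bk k \<circ> d \<circ> ck j) \<circ> p) (\<eta> j)) = (\<Sum>j\<in>K. (p \<circ> (bk k \<circ> d \<circ> ck j) \<circ> p) (T (\<eta> j)))" for k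
      proof -
        have "T (\<Sum>j\<in>K. (p \<circ> (bk k \<circ> d \<circ> ck j) \<circ> p) (\<eta> j)) = (\<Sum>j\<in>K. T ((p \<circ> (bk k \<circ> d \<circ> ck j) \<circ> p) (\<eta> j)))"
          by (rule Tsum[OF _ Kfin]) auto
        also have "\<dots> = (\<Sum>j\<in>K. (p \<circ> (bk k \<circ> d \<circ> ck j) \<circ> p) (T (\<eta> j)))"
          by (rule sum.cong[OF refl], rule Tc[OF \<eta>N pBp_in])
             (intro Bset_comp bkB ckB d)
        finally show ?thesis .
      qed
      then show ?thesis by simp
    qed
    also have "\<dots> = (\<Sum>k\<in>K. \<Sum>j\<in>K. ck k (p (bk k (d (ck j (T (\<eta> j)))))))"
      by (simp add: B_sum[OF ckB] TpN[OF \<eta>N])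
    also have "\<dots> = (\<Sum>j\<in>K. (\<Sum>k\<in>K. ck k (p (bk k (d (ck j (T (\<eta> j))))))))"
      by (rule sum.swap)
    also have "\<dots> = (\<Sum>j\<in>K. d (ck j (T (\<eta> j))))"
      by (simp add: dec)
    also have "\<dots> = d (S \<xi>)"
      by (simp add: Sx B_sum[OF d] \<eta>_def)
    finally show ?thesis .
  qed
  have SC: "S \<in> End0_C sM act UNIV BB"
    using SE Scomm by (simp add: End0_C_def)
  have "restrict_to N S = T"
  proof
    fix x show "restrict_to N S x = T x"
    proof (cases "x \<in> N")
      case True
      have "S x = (\<Sum>k\<in>K. ck k (T ((p \<circ> bk k \<circ> p) x)))"
        using pN[OF True] by (simp add: Sx)
      also have "\<dots> = (\<Sum>k\<in>K. ck k (p (bk k (p (T x)))))"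
        using Tc[OF True pBp_in[OF bkB]] by simp
      also have "\<dots> = p (T x)" by (simp add: dec)
      also have "\<dots> = T x" using TpN[OF True] .
      finally show ?thesis using True by (simp add: restrict_to_def)
    next
      case False
      then show ?thesis using Tp by (simp add: restrict_to_def)
    qed
  qed
  then show ?thesis using SC by blast
qed

end



lemma vs_A: "cx_algebra sA \<Longrightarrow> vector_space sA"
  by (simp add: cx_algebra_def)

locale partC = vsM sA sM act
  for sA :: "complex \<Rightarrow> 'a::ring \<Rightarrow> 'a" and sM :: "complex \<Rightarrow> 'm::ab_group_add \<Rightarrow> 'm" and act :: "'a \<Rightarrow> 'm \<Rightarrow> 'm" +
  assumes cx: "cx_algebra sA" and auf: "AUF sA" and coh: "coherent sM act"
begin

sublocale A: vector_space sA by (rule vs_A[OF cx])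

lemma sA_ml: "sA c a * b = sA c (a * b)" using cx unfolding cx_algebra_def by metis
lemma sA_mr: "a * sA c b = sA c (a * b)" using cx unfolding cx_algebra_def by metis

lemma sum_orth_l:
  fixes E :: "'a set"
  assumes E: "\<forall>e\<in>E. \<forall>f\<in>E. e \<noteq> f \<longrightarrow> e * f = 0" "\<forall>e\<in>E. e * e = e"
    and E0: "E0 \<subseteq> E" "finite E0" and i: "i \<in> E"
  shows "(\<Sum>E0) * i = (if i \<in> E0 then i else 0)" "i * (\<Sum>E0) = (if i \<in> E0 then i else 0)"
proof -
  have "(\<Sum>E0) * i = (\<Sum>e\<in>E0. e * i)" by (rule sum_distrib_right)
  also have "\<dots> = (\<Sum>e\<in>E0. if e = i then i else 0)"
    by (rule sum.cong) (use E E0 i in auto)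
  also have "\<dots> = (if i \<in> E0 then i else 0)" using E0 by (simp add: sum.delta')
  finally show "(\<Sum>E0) * i = (if i \<in> E0 then i else 0)" .
  have "i * (\<Sum>E0) = (\<Sum>e\<in>E0. i * e)" by (rule sum_distrib_left)
  also have "\<dots> = (\<Sum>e\<in>E0. if e = i then i else 0)"
    by (rule sum.cong) (use E E0 i in auto)
  also have "\<dots> = (if i \<in> E0 then i else 0)" using E0 by (simp add: sum.delta')
  finally show "i * (\<Sum>E0) = (if i \<in> E0 then i else 0)" .
qed

lemma left_unit_exists:
  fixes E :: "'a set"
  assumes E: "\<forall>e\<in>E. \<forall>f\<in>E. e \<noteq> f \<longrightarrow> e * f = 0" "\<forall>e\<in>E. e * e = e"
    and x: "x \<in> A.span (\<Union>e\<in>E. \<Union>f\<in>E. {e * a * f | a. True})"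
  shows "\<exists>E0. E0 \<subseteq> E \<and> finite E0 \<and> (\<forall>E1. E0 \<subseteq> E1 \<and> E1 \<subseteq> E \<and> finite E1 \<longrightarrow> (\<Sum>E1) * x = x)"
  using x
proof (induction rule: A.span_induct_alt)
  case base
  then show ?case by (intro exI[of _ "{}"]) auto
next
  case (step c g y)
  then obtain e f a where g: "e \<in> E" "f \<in> E" "g = e * a * f" by blast
  from step obtain E0 where E0: "E0 \<subseteq> E" "finite E0" "\<forall>E1. E0 \<subseteq> E1 \<and> E1 \<subseteq> E \<and> finite E1 \<longrightarrow> (\<Sum>E1) * y = y"
    by blast
  show ?case
  proof (intro exI[of _ "insert e E0"] conjI allI impI)
    fix E1 assume E1: "insert e E0 \<subseteq> E1 \<and> E1 \<subseteq> E \<and> finite E1"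
    have "(\<Sum>E1) * e = e" using sum_orth_l(1)[OF E _ _ g(1), of E1] E1 by simp
    then have "(\<Sum>E1) * g = g" by (simp add: g(3) mult.assoc[symmetric])
    then show "(\<Sum>E1) * (sA c g + y) = sA c g + y"
      using E0(3) E1 by (simp add: distrib_left sA_mr)
  qed (use E0 g in auto)
qed


lemma qc: "\<exists>a. act a \<xi> = \<xi>"
  using coh by (auto simp: coherent_def quasicoherent_on_def)

lemma C_e: "\<exists>e F G. finite F \<and> (\<forall>N. A_submodule sM act N \<and> F \<subseteq> N \<longrightarrow> N = UNIV)
   \<and> (\<forall>\<xi>\<in>F. act e \<xi> = \<xi>) \<and> finite G \<and> (\<forall>x. e * x * e \<in> A.span G)"
proof -
  obtain E :: "'a set" where Eid: "\<forall>e\<in>E. e * e = e" and Eo: "\<forall>e\<in>E. \<forall>f\<in>E. e \<noteq> f \<longrightarrow> e * f = 0"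
    and Ef: "\<forall>e\<in>E. \<forall>f\<in>E. fin_dim_sub sA {e * a * f | a. True}"
    and Es: "A.span (\<Union>e\<in>E. \<Union>f\<in>E. {e * a * f | a. True}) = UNIV"
    using auf unfolding AUF_def by blast
  obtain F where F: "finite F" "\<forall>N. A_submodule sM act N \<and> F \<subseteq> N \<longrightarrow> N = UNIV"
    using coh unfolding coherent_def by blast
  define a where "a = (\<lambda>\<xi>. SOME a. act a \<xi> = \<xi>)"
  have a: "act (a \<xi>) \<xi> = \<xi>" for \<xi> unfolding a_def using qc by (rule someI_ex)
  have "\<forall>\<xi>\<in>F. \<exists>E0. E0 \<subseteq> E \<and> finite E0 \<and> (\<forall>E1. E0 \<subseteq> E1 \<and> E1 \<subseteq> E \<and> finite E1 \<longrightarrow> (\<Sum>E1) * a \<xi> = a \<xi>)"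
  proof
    fix \<xi> assume "\<xi> \<in> F"
    show "\<exists>E0. E0 \<subseteq> E \<and> finite E0 \<and> (\<forall>E1. E0 \<subseteq> E1 \<and> E1 \<subseteq> E \<and> finite E1 \<longrightarrow> (\<Sum>E1) * a \<xi> = a \<xi>)"
      by (rule left_unit_exists[OF Eo Eid]) (simp only: Es UNIV_I)
  qed
  from bchoice[OF this] obtain E0f where E0f': "\<forall>\<xi>\<in>F. E0f \<xi> \<subseteq> E \<and> finite (E0f \<xi>) \<and>
       (\<forall>E1. E0f \<xi> \<subseteq> E1 \<and> E1 \<subseteq> E \<and> finite E1 \<longrightarrow> (\<Sum>E1) * a \<xi> = a \<xi>)"
    by blast
  have E0f: "E0f \<xi> \<subseteq> E \<and> finite (E0f \<xi>) \<and>
       (\<forall>E1. E0f \<xi> \<subseteq> E1 \<and> E1 \<subseteq> E \<and> finite E1 \<longrightarrow> (\<Sum>E1) * a \<xi> = a \<xi>)" if "\<xi> \<in> F" for \<xi>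
    using E0f' that by blast
  define E0 where "E0 = (\<Union>\<xi>\<in>F. E0f \<xi>)"
  have E0: "E0 \<subseteq> E" "finite E0" using E0f F(1) by (auto simp: E0_def)
  define e where "e = \<Sum>E0"
  have ea: "e * a \<xi> = a \<xi>" if "\<xi> \<in> F" for \<xi>
  proof -
    have "E0f \<xi> \<subseteq> E0" using that by (auto simp: E0_def)
    then show ?thesis using E0f[OF that] E0 unfolding e_def by blast
  qed
  have eF: "\<forall>\<xi>\<in>F. act e \<xi> = \<xi>"
  proof
    fix \<xi> assume "\<xi> \<in> F"
    have "act e \<xi> = act e (act (a \<xi>) \<xi>)" using a by simp
    also have "\<dots> = act (e * a \<xi>) \<xi>" by (simp add: act_mult)
    also have "\<dots> = \<xi>" using ea[OF \<open>\<xi> \<in> F\<close>] a by simp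
    finally show "act e \<xi> = \<xi>" .
  qed
  define Fs where "Fs = (\<lambda>i j. SOME Fij. finite Fij \<and> A.span Fij = {i * a * j | a. True})"
  have Fs: "finite (Fs i j) \<and> A.span (Fs i j) = {i * a * j | a. True}" if "i \<in> E" "j \<in> E" for i j
  proof -
    have "\<exists>Fij. finite Fij \<and> A.span Fij = {i * a * j | a. True}"
      using Ef that by (auto simp: fin_dim_sub_def)
    then show ?thesis unfolding Fs_def by (rule someI_ex)
  qed
  define G where "G = (\<Union>i\<in>E0. \<Union>j\<in>E0. Fs i j)"
  have Gf: "finite G" unfolding G_def
  proof (intro finite_UN_I[OF E0(2)])
    fix i j assume "i \<in> E0" "j \<in> E0"
    then show "finite (Fs i j)" using Fs E0(1) by blast
  qed
  have eG: "e * x * e \<in> A.span G" for x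
  proof -
    have "x \<in> A.span (\<Union>e\<in>E. \<Union>f\<in>E. {e * a * f | a. True})" using Es by simp
    then show ?thesis
    proof (induction rule: A.span_induct)
      case (step x)
      then obtain i j b where ij: "i \<in> E" "j \<in> E" "x = i * b * j" by blast
      have "e * x * e = (e * i) * b * (j * e)" by (simp add: ij mult.assoc)
      also have "\<dots> = (if i \<in> E0 \<and> j \<in> E0 then i * b * j else 0)"
        using sum_orth_l[OF Eo Eid E0 ij(1)] sum_orth_l[OF Eo Eid E0 ij(2)] by (simp add: e_def)
      finally have x: "e * x * e = (if i \<in> E0 \<and> j \<in> E0 then i * b * j else 0)" .
      show ?case
      proof (cases "i \<in> E0 \<and> j \<in> E0")
        case True
        then have "i * b * j \<in> A.span (Fs i j)" using Fs[OF ij(1,2)] by blast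
        moreover have "A.span (Fs i j) \<subseteq> A.span G"
          by (rule A.span_mono) (use True in \<open>auto simp: G_def\<close>)
        ultimately show ?thesis using x True by auto
      next
        case False
        then show ?thesis using x A.span_zero by auto
      qed
    next
      case base
      show ?case unfolding A.subspace_def
      proof (intro conjI ballI allI)
        show "0 \<in> Collect (\<lambda>x. e * x * e \<in> A.span G)" by (simp add: A.span_zero)
        fix x y assume "x \<in> Collect (\<lambda>x. e * x * e \<in> A.span G)" "y \<in> Collect (\<lambda>x. e * x * e \<in> A.span G)"
        then show "x + y \<in> Collect (\<lambda>x. e * x * e \<in> A.span G)"
          by (simp add: distrib_left distrib_right A.span_add)
      next
        fix c x assume "x \<in> Collect (\<lambda>x. e * x * e \<in> A.span G)"
        then show "sA c x \<in> Collect (\<lambda>x. e * x * e \<in> A.span G)"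
          by (simp add: sA_ml sA_mr A.span_scale)
      qed
    qed
  qed
  show ?thesis using F eF Gf eG by blast
qed


lemma act_sum: "act a (\<Sum>j\<in>J. v j) = (\<Sum>j\<in>J. act a (v j))"
  using sum_comp_morphism[of "act a" v J] act_add by (simp add: comp_def)

lemma act_sum2: "act (\<Sum>j\<in>J. v j) x = (\<Sum>j\<in>J. act (v j) x)"
  using sum_comp_morphism[of "\<lambda>a. act a x" v J] act_add2 by (simp add: comp_def)

lemma B_fin: "\<exists>G. finite G \<and> G \<subseteq> Bset sM act \<and> Bset sM act \<subseteq> FS.span G"
proof -
  obtain e F GA where F: "finite F" "\<forall>N. A_submodule sM act N \<and> F \<subseteq> N \<longrightarrow> N = UNIV"
    and eF: "\<forall>\<xi>\<in>F. act e \<xi> = \<xi>" and GA: "finite GA" "\<forall>x. e * x * e \<in> A.span GA"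
    using C_e by blast
  define N0 where "N0 = {\<Sum>\<xi>\<in>F. act (g \<xi>) \<xi> | g. True}"
  have "A_submodule sM act N0"
    unfolding A_submodule_def M.subspace_def
  proof (intro conjI ballI allI)
    show "0 \<in> N0" unfolding N0_def by (intro CollectI exI[of _ "\<lambda>_. 0"]) simp
    fix x y assume "x \<in> N0" "y \<in> N0"
    then obtain g1 g2 where "x = (\<Sum>\<xi>\<in>F. act (g1 \<xi>) \<xi>)" "y = (\<Sum>\<xi>\<in>F. act (g2 \<xi>) \<xi>)"
      by (auto simp: N0_def)
    then have "x + y = (\<Sum>\<xi>\<in>F. act (g1 \<xi> + g2 \<xi>) \<xi>)" by (simp add: act_add2 sum.distrib)
    then show "x + y \<in> N0" by (auto simp: N0_def)
  next
    fix c x assume "x \<in> N0"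
    then obtain g1 where "x = (\<Sum>\<xi>\<in>F. act (g1 \<xi>) \<xi>)" by (auto simp: N0_def)
    then have "sM c x = (\<Sum>\<xi>\<in>F. act (sA c (g1 \<xi>)) \<xi>)" by (simp add: act_sc2 M.scale_sum_right)
    then show "sM c x \<in> N0" by (auto simp: N0_def)
  next
    fix a x assume "x \<in> N0"
    then obtain g1 where "x = (\<Sum>\<xi>\<in>F. act (g1 \<xi>) \<xi>)" by (auto simp: N0_def)
    then have "act a x = (\<Sum>\<xi>\<in>F. act (a * g1 \<xi>) \<xi>)" by (simp add: act_sum act_mult)
    then show "act a x \<in> N0" by (auto simp: N0_def)
  qed
  moreover have "F \<subseteq> N0"
  proof
    fix \<xi>0 assume "\<xi>0 \<in> F"
    obtain a0 where a0: "act a0 \<xi>0 = \<xi>0" using qc by blast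
    have "(\<Sum>\<xi>\<in>F. act (if \<xi> = \<xi>0 then a0 else 0) \<xi>) = (\<Sum>\<xi>\<in>F. if \<xi> = \<xi>0 then act a0 \<xi>0 else 0)"
      by (rule sum.cong) auto
    also have "\<dots> = \<xi>0" using \<open>\<xi>0 \<in> F\<close> F(1) a0 by simp
    finally show "\<xi>0 \<in> N0" unfolding N0_def by (intro CollectI exI[of _ "\<lambda>\<xi>. if \<xi> = \<xi>0 then a0 else 0"]) simp
  qed
  ultimately have N0U: "N0 = UNIV" using F(2) by blast
  define GM where "GM = (\<lambda>(y, \<xi>). act y \<xi>) ` (GA \<times> F)"
  have GMf: "finite GM" using GA(1) F(1) by (simp add: GM_def)
  have actspan: "act y \<xi> \<in> M.span GM" if "y \<in> A.span GA" "\<xi> \<in> F" for y \<xi>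
    using that(1)
  proof (induction rule: A.span_induct)
    case base
    show ?case unfolding A.subspace_def
      by (auto simp: act_add2 act_sc2 M.span_zero M.span_add M.span_scale)
  next
    case (step y)
    then show ?case using that(2) by (intro M.span_base) (auto simp: GM_def)
  qed
  have eM: "act e x \<in> M.span GM" for x
  proof -
    have "x \<in> N0" using N0U by simp
    then obtain g where x: "x = (\<Sum>\<xi>\<in>F. act (g \<xi>) \<xi>)" by (auto simp: N0_def)
    have "act e x = (\<Sum>\<xi>\<in>F. act (e * g \<xi> * e) \<xi>)"
    proof -
      have "act e x = (\<Sum>\<xi>\<in>F. act (e * g \<xi>) \<xi>)" by (simp add: x act_sum act_mult)
      also have "\<dots> = (\<Sum>\<xi>\<in>F. act (e * g \<xi> * e) \<xi>)"
        by (rule sum.cong) (use eF in \<open>auto simp: act_mult\<close>)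
      finally show ?thesis .
    qed
    then show ?thesis using actspan GA(2) by (auto intro!: M.span_sum)
  qed
  have TF: "T \<xi> \<in> M.span GM" if "T \<in> Bset sM act" "\<xi> \<in> F" for T \<xi>
  proof -
    have "T \<xi> = T (act e \<xi>)" using eF that by simp
    also have "\<dots> = act e (T \<xi>)" using B_act[OF that(1)] .
    finally have eq: "T \<xi> = act e (T \<xi>)" .
    from eM[of "T \<xi>"] show ?thesis by (simp only: eq[symmetric])
  qed
  have T0: "T = 0" if "T \<in> Bset sM act" "\<forall>\<xi>\<in>F. T \<xi> = 0" for T
  proof -
    have "A_submodule sM act {x. T x = 0}"
      unfolding A_submodule_def M.subspace_def
      using B_add[OF that(1)] B_sc[OF that(1)] B_act[OF that(1)] B_0[OF that(1)] by auto
    then have "{x. T x = 0} = UNIV" using F(2) that(2) by blast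
    then show ?thesis by (auto simp: fun_eq_iff)
  qed
  define \<Phi> where "\<Phi> = (\<lambda>(T::'m\<Rightarrow>'m) x. if x \<in> F then T x else 0)"
  define \<delta> where "\<delta> = (\<lambda>\<xi> (g::'m) (x::'m). if x = \<xi> then g else 0)"
  define H where "H = (\<lambda>(\<xi>, g). \<delta> \<xi> g) ` (F \<times> GM)"
  have Hf: "finite H" using F(1) GMf by (simp add: H_def)
  have \<delta>span: "\<delta> \<xi> g \<in> FS.span H" if "g \<in> M.span GM" "\<xi> \<in> F" for g \<xi>
    using that(1)
  proof (induction rule: M.span_induct_alt)
    case base
    have "\<delta> \<xi> 0 = 0" by (auto simp: \<delta>_def fun_eq_iff)
    then show ?case by (metis FS.span_zero)
  next
    case (step c x y)
    have "\<delta> \<xi> (sM c x + y) = sF sM c (\<delta> \<xi> x) + \<delta> \<xi> y" by (auto simp: \<delta>_def fun_eq_iff)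
    moreover have "\<delta> \<xi> x \<in> H" using step(1) that(2) by (auto simp: H_def)
    ultimately show ?case using step(2) FS.span_add FS.span_scale FS.span_base by metis
  qed
  have \<Phi>H: "\<Phi> T \<in> FS.span H" if "T \<in> Bset sM act" for T
  proof -
    have "\<Phi> T = (\<Sum>\<xi>\<in>F. \<delta> \<xi> (T \<xi>))"
      by (auto simp: fun_eq_iff \<Phi>_def \<delta>_def sum_fun_apply F(1))
    then show ?thesis using \<delta>span TF[OF that] by (auto intro!: FS.span_sum)
  qed
  have lin: "Vector_Spaces.linear (sF sM) (sF sM) \<Phi>"
    unfolding Vector_Spaces.linear_iff
    by (auto simp: \<Phi>_def fun_eq_iff FS.vector_space_axioms)
  interpret FSP: vector_space_pair "sF sM :: complex \<Rightarrow> ('m\<Rightarrow>'m) \<Rightarrow> _" "sF sM :: complex \<Rightarrow> ('m\<Rightarrow>'m) \<Rightarrow> _"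
    by unfold_locales
  have spB: "FS.span (Bset sM act) = Bset sM act" using Bset_subspace by simp
  have inj: "inj_on \<Phi> (FS.span (Bset sM act))"
    unfolding spB
  proof (rule inj_onI)
    fix T1 T2 assume T: "T1 \<in> Bset sM act" "T2 \<in> Bset sM act" "\<Phi> T1 = \<Phi> T2"
    have "T1 - T2 \<in> Bset sM act" using T(1,2) Bset_subspace FS.subspace_diff by blast
    moreover have "\<forall>\<xi>\<in>F. (T1 - T2) \<xi> = 0"
    proof
      fix \<xi> assume "\<xi> \<in> F"
      then show "(T1 - T2) \<xi> = 0" using fun_cong[OF T(3), of \<xi>] by (simp add: \<Phi>_def)
    qed
    ultimately have "T1 - T2 = 0" using T0 by blast
    then show "T1 = T2" by simp
  qed
  obtain g where g: "range g \<subseteq> FS.span (Bset sM act)" "Vector_Spaces.linear (sF sM) (sF sM) g"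
      "\<forall>x\<in>FS.span (Bset sM act). g (\<Phi> x) = x"
    using FSP.linear_inj_on_left_inverse[OF lin inj] by blast
  have "Bset sM act \<subseteq> FS.span (g ` H)"
  proof
    fix T assume T: "T \<in> Bset sM act"
    then have "T = g (\<Phi> T)" using g(3) spB by simp
    also have "\<dots> \<in> g ` FS.span H" using \<Phi>H[OF T] by simp
    also have "\<dots> = FS.span (g ` H)" using FSP.linear_span_image[OF g(2)] by simp
    finally show "T \<in> FS.span (g ` H)" .
  qed
  moreover have "g ` H \<subseteq> Bset sM act" using g(1) spB by auto
  ultimately show ?thesis using Hf by blast
qed

end



lemma vsC: "vector_space ((*) :: complex \<Rightarrow> complex \<Rightarrow> complex)"
  unfolding vector_space_def by (simp add: algebra_simps)



lemma vsV: "vector_space sV"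
  unfolding vector_space_def sV_def by (simp add: fun_eq_iff algebra_simps)

interpretation VV: vector_space sV by (rule vsV)

lemma (in vector_space) subspace_eq_dim:
  assumes S: "subspace S" and T: "subspace T" and ST: "S \<subseteq> T" and Tf: "T \<subseteq> span Fn" "finite Fn"
    and d: "dim T \<le> dim S"
  shows "S = T"
proof (rule ccontr)
  assume ne: "S \<noteq> T"
  obtain BS where BS: "BS \<subseteq> S" "independent BS" "S \<subseteq> span BS" "card BS = dim S"
    using basis_exists by blast
  obtain BT where BT: "BT \<subseteq> T" "independent BT" "T \<subseteq> span BT" "card BT = dim T"
    using basis_exists by blast
  have fBT: "finite BT" using independent_span_bound[OF Tf(2) BT(2)] BT(1) Tf(1) by blast
  obtain x where x: "x \<in> T" "x \<notin> S" using ne ST by blast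
  have spS: "span BS \<subseteq> S" using span_minimal[OF BS(1) S] .
  have xn: "x \<notin> span BS" using x spS by blast
  have ind: "independent (insert x BS)" using independent_insertI[OF xn BS(2)] .
  have "insert x BS \<subseteq> span BT" using x BS(1) ST BT(3) by blast
  from independent_span_bound[OF fBT ind this]
  have f: "finite (insert x BS)" "card (insert x BS) \<le> card BT" by auto
  have "x \<notin> BS" using xn span_base by blast
  then have c: "card (insert x BS) = card BS + 1" using f(1) by simp
  show False using f(2) BT(4) BS(4) d c by linarith
qed


locale partB = partC sA sM act
  for sA :: "complex \<Rightarrow> 'a::ring \<Rightarrow> 'a" and sM :: "complex \<Rightarrow> 'm::ab_group_add \<Rightarrow> 'm" and act :: "'a \<Rightarrow> 'm \<Rightarrow> 'm" +
  fixes p :: "'m \<Rightarrow> 'm"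
  assumes pB: "p \<in> Bset sM act" and pp: "p \<circ> p = p" and gen: "generating sM act p"
begin

abbreviation "BB \<equiv> Bset sM act"

definition Gen where "Gen = {c \<circ> p \<circ> b | b c. b \<in> BB \<and> c \<in> BB}"
definition II where "II = FS.span Gen"

lemma I_sub: "II \<subseteq> BB"
  unfolding II_def
  by (rule FS.span_minimal[OF _ Bset_subspace]) (auto simp: Gen_def intro!: Bset_comp pB)

lemma I_left: "b \<in> BB \<Longrightarrow> z \<in> II \<Longrightarrow> b \<circ> z \<in> II"
  unfolding II_def
proof (rule span_map[where \<Psi>="\<lambda>x. b \<circ> x"])
  assume b: "b \<in> BB"
  show "b \<circ> (u + v) = (b \<circ> u) + (b \<circ> v)" for u v by (auto simp: fun_eq_iff B_add[OF b])
  show "b \<circ> sF sM c u = sF sM c (b \<circ> u)" for c u by (auto simp: fun_eq_iff B_sc[OF b] sF_def)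
  show "b \<circ> 0 = 0" by (auto simp: fun_eq_iff B_0[OF b])
  fix y assume "y \<in> Gen"
  then obtain b' c where "y = c \<circ> p \<circ> b'" "b' \<in> BB" "c \<in> BB" by (auto simp: Gen_def)
  then have "b \<circ> y = (b \<circ> c) \<circ> p \<circ> b'" "b \<circ> c \<in> BB" using Bset_comp[OF b] by (auto simp: comp_assoc)
  then show "b \<circ> y \<in> FS.span Gen" using \<open>b' \<in> BB\<close> by (intro FS.span_base) (auto simp: Gen_def)
qed

lemma I_p: "x \<in> BB \<Longrightarrow> p \<circ> x \<in> II"
  unfolding II_def
proof (intro FS.span_base)
  assume "x \<in> BB"
  have "p \<circ> x = id \<circ> p \<circ> x" by simp
  then show "p \<circ> x \<in> Gen" unfolding Gen_def using \<open>x \<in> BB\<close> Bset_id by blast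
qed

end

locale partB_neg = partB sA sM act p
  for sA :: "complex \<Rightarrow> 'a::ring \<Rightarrow> 'a" and sM :: "complex \<Rightarrow> 'm::ab_group_add \<Rightarrow> 'm" and act :: "'a \<Rightarrow> 'm \<Rightarrow> 'm"
   and p :: "'m \<Rightarrow> 'm" +
  assumes nid: "id \<notin> II"
begin

lemma lin_iff': "Vector_Spaces.linear (sF sM) (*) (\<phi> :: ('m \<Rightarrow> 'm) \<Rightarrow> complex) \<longleftrightarrow>
   (\<forall>x y. \<phi> (x + y) = \<phi> x + \<phi> y) \<and> (\<forall>c x. \<phi> (sF sM c x) = c * \<phi> x)"
  by (simp add: Vector_Spaces.linear_iff FS.vector_space_axioms vsC)

lemma phi0: "\<exists>\<phi> :: ('m \<Rightarrow> 'm) \<Rightarrow> complex. Vector_Spaces.linear (sF sM) (*) \<phi> \<and> \<phi> id = 1 \<and> (\<forall>x\<in>II. \<phi> x = 0)"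
proof -
  interpret FC: vector_space_pair "sF sM :: complex \<Rightarrow> ('m\<Rightarrow>'m) \<Rightarrow> _" "(*) :: complex \<Rightarrow> complex \<Rightarrow> complex"
    by (intro vector_space_pair.intro FS.vector_space_axioms vsC)
  obtain BI where BI: "BI \<subseteq> II" "FS.independent BI" "II \<subseteq> FS.span BI" "card BI = FS.dim II"
    by (rule FS.basis_exists)
  have "FS.span BI \<subseteq> II" using FS.span_minimal[OF BI(1)] unfolding II_def by simp
  then have "id \<notin> FS.span BI" using nid by blast
  then have ind: "FS.independent (insert id BI)" using FS.independent_insertI[OF _ BI(2)] by blast
  obtain g where g: "Vector_Spaces.linear (sF sM) (*) g" "\<forall>x\<in>insert id BI. g x = (if x = id then 1 else 0)"
    using FC.linear_independent_extend[OF ind, where f="\<lambda>x. if x = id then 1 else 0"] by blast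
  have g0: "g x = 0" if "x \<in> BI" for x
  proof -
    have "x \<noteq> id" using that BI(1) nid by blast
    have "g x = (if x = id then 1 else 0)" using g(2) that by blast
    then show ?thesis using \<open>x \<noteq> id\<close> by simp
  qed
  have "\<forall>x\<in>II. g x = 0"
  proof
    fix x assume "x \<in> II"
    then have "x \<in> FS.span BI" using BI(3) by blast
    then show "g x = 0" by (rule FC.linear_eq_0_on_span[OF g(1), rotated]) (rule g0)
  qed
  moreover have "g id = 1" using g(2) by simp
  ultimately show ?thesis using g(1) by blast
qed


definition Gfin where "Gfin = (SOME G. finite G \<and> G \<subseteq> BB \<and> BB \<subseteq> FS.span G)"

lemma Gfin: "finite Gfin" "Gfin \<subseteq> BB" "BB \<subseteq> FS.span Gfin"
proof -
  have "finite Gfin \<and> Gfin \<subseteq> BB \<and> BB \<subseteq> FS.span Gfin"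
    unfolding Gfin_def using B_fin by (rule someI_ex)
  then show "finite Gfin" "Gfin \<subseteq> BB" "BB \<subseteq> FS.span Gfin" by auto
qed

definition xs where "xs = (SOME xs. set xs = Gfin)"

lemma set_xs: "set xs = Gfin"
  unfolding xs_def using finite_list[OF Gfin(1)] by (rule someI_ex)

lemma xs_B: "k < length xs \<Longrightarrow> xs ! k \<in> BB"
  using set_xs Gfin(2) nth_mem by blast

definition Wd :: "(('m \<Rightarrow> 'm) \<Rightarrow> complex) set" where
  "Wd = {\<phi>. Vector_Spaces.linear (sF sM) (*) \<phi> \<and> (\<forall>x\<in>II. \<phi> x = 0)}"

definition iota :: "(('m \<Rightarrow> 'm) \<Rightarrow> complex) \<Rightarrow> nat \<Rightarrow> complex" where
  "iota \<phi> = (\<lambda>k. if k < length xs then \<phi> (xs ! k) else 0)"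

definition actW :: "('m \<Rightarrow> 'm) \<Rightarrow> (('m \<Rightarrow> 'm) \<Rightarrow> complex) \<Rightarrow> (('m \<Rightarrow> 'm) \<Rightarrow> complex)" where
  "actW b \<phi> = (\<lambda>x. \<phi> (b \<circ> x))"

definition betaW :: "('m \<Rightarrow> 'm) \<Rightarrow> (nat \<Rightarrow> complex) \<Rightarrow> (nat \<Rightarrow> complex)" where
  "betaW b w = iota (actW b (SOME \<phi>. \<phi> \<in> Wd \<and> iota \<phi> = w))"

definition Wp where "Wp = iota ` Wd"

lemma Wd_lin: "\<phi> \<in> Wd \<Longrightarrow> \<phi> (x + y) = \<phi> x + \<phi> y" "\<phi> \<in> Wd \<Longrightarrow> \<phi> (sF sM c x) = c * \<phi> x"
  by (auto simp: Wd_def lin_iff')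

lemma Wd_I: "\<phi> \<in> Wd \<Longrightarrow> x \<in> II \<Longrightarrow> \<phi> x = 0"
  by (auto simp: Wd_def)

lemma Wd_intro: "(\<And>x y. \<phi> (x + y) = \<phi> x + \<phi> y) \<Longrightarrow> (\<And>c x. \<phi> (sF sM c x) = c * \<phi> x)
   \<Longrightarrow> (\<And>x. x \<in> II \<Longrightarrow> \<phi> x = 0) \<Longrightarrow> \<phi> \<in> Wd"
  by (auto simp: Wd_def lin_iff')

lemma lin_eq_on:
  assumes "\<phi> \<in> Wd" "\<psi> \<in> Wd" "iota \<phi> = iota \<psi>" "x \<in> BB"
  shows "\<phi> x = \<psi> x"
proof -
  interpret FC: vector_space_pair "sF sM :: complex \<Rightarrow> ('m\<Rightarrow>'m) \<Rightarrow> _" "(*) :: complex \<Rightarrow> complex \<Rightarrow> complex"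
    by (intro vector_space_pair.intro FS.vector_space_axioms vsC)
  have l: "Vector_Spaces.linear (sF sM) (*) \<phi>" "Vector_Spaces.linear (sF sM) (*) \<psi>"
    using assms(1,2) by (auto simp: Wd_def)
  show ?thesis
  proof (rule FC.linear_eq_on[OF l])
    show "x \<in> FS.span Gfin" using assms(4) Gfin(3) by blast
    fix b assume "b \<in> Gfin"
    then obtain k where k: "k < length xs" "xs ! k = b" using set_xs by (metis in_set_conv_nth)
    show "\<phi> b = \<psi> b" using fun_cong[OF assms(3), of k] k by (simp add: iota_def)
  qed
qed

lemma Wd_add: "\<phi> \<in> Wd \<Longrightarrow> \<psi> \<in> Wd \<Longrightarrow> \<phi> + \<psi> \<in> Wd"
  by (rule Wd_intro) (auto simp: Wd_lin Wd_I distrib_left)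

lemma Wd_scale: "\<phi> \<in> Wd \<Longrightarrow> (\<lambda>x. c * \<phi> x) \<in> Wd"
  by (rule Wd_intro) (auto simp: Wd_lin Wd_I algebra_simps)

lemma Wd_0: "(\<lambda>x. 0) \<in> Wd"
  by (rule Wd_intro) auto

lemma actW_Wd: assumes b: "b \<in> BB" and \<phi>: "\<phi> \<in> Wd" shows "actW b \<phi> \<in> Wd"
proof (rule Wd_intro)
  fix x y :: "'m \<Rightarrow> 'm"
  have "b \<circ> (x + y) = (b \<circ> x) + (b \<circ> y)" by (auto simp: fun_eq_iff B_add[OF b])
  then show "actW b \<phi> (x + y) = actW b \<phi> x + actW b \<phi> y" by (simp add: actW_def Wd_lin[OF \<phi>])
next
  fix c and x :: "'m \<Rightarrow> 'm"
  have "b \<circ> sF sM c x = sF sM c (b \<circ> x)" by (auto simp: fun_eq_iff B_sc[OF b] sF_def)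
  then show "actW b \<phi> (sF sM c x) = c * actW b \<phi> x" by (simp add: actW_def Wd_lin[OF \<phi>])
next
  fix x assume "x \<in> II"
  then show "actW b \<phi> x = 0" using I_left[OF b] Wd_I[OF \<phi>] by (simp add: actW_def)
qed

lemma iota_add: "iota (\<phi> + \<psi>) = iota \<phi> + iota \<psi>"
  by (auto simp: iota_def fun_eq_iff)
lemma iota_scale: "iota (\<lambda>x. c * \<phi> x) = sV c (iota \<phi>)"
  by (auto simp: iota_def fun_eq_iff sV_def)
lemma iota_0: "iota (\<lambda>x. 0) = 0"
  by (auto simp: iota_def fun_eq_iff)

lemma beta_eq:
  assumes \<phi>: "\<phi> \<in> Wd" and b: "b \<in> BB"
  shows "betaW b (iota \<phi>) = iota (actW b \<phi>)"
proof -
  define \<psi> where "\<psi> = (SOME \<psi>. \<psi> \<in> Wd \<and> iota \<psi> = iota \<phi>)"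
  have \<psi>: "\<psi> \<in> Wd \<and> iota \<psi> = iota \<phi>" unfolding \<psi>_def by (rule someI[of _ \<phi>]) (simp add: \<phi>)
  have "iota (actW b \<psi>) = iota (actW b \<phi>)"
  proof
    fix k show "iota (actW b \<psi>) k = iota (actW b \<phi>) k"
    proof (cases "k < length xs")
      case True
      have "b \<circ> xs ! k \<in> BB" using Bset_comp[OF b xs_B[OF True]] .
      then have "\<psi> (b \<circ> xs ! k) = \<phi> (b \<circ> xs ! k)" using lin_eq_on[of \<psi> \<phi>] \<psi> \<phi> by blast
      then show ?thesis by (simp add: iota_def actW_def True)
    qed (simp add: iota_def)
  qed
  then show ?thesis by (simp add: betaW_def \<psi>_def)
qed

lemma actW_add: "actW (b1 + b2) \<phi> = actW b1 \<phi> + actW b2 \<phi>" if "\<phi> \<in> Wd"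
proof -
  have h: "(b1 + b2) \<circ> x = (b1 \<circ> x) + (b2 \<circ> x)" for x :: "'m \<Rightarrow> 'm" by (auto simp: fun_eq_iff)
  show ?thesis by (auto simp: actW_def fun_eq_iff Wd_lin[OF that] h)
qed

lemma actW_scale: "actW (sF sM c b) \<phi> = (\<lambda>x. c * actW b \<phi> x)" if "\<phi> \<in> Wd"
proof -
  have h: "sF sM c b \<circ> x = sF sM c (b \<circ> x)" for x :: "'m \<Rightarrow> 'm" by (auto simp: fun_eq_iff sF_def)
  show ?thesis by (auto simp: actW_def fun_eq_iff Wd_lin[OF that] h)
qed

lemma actW_plus: "actW b (\<phi> + \<psi>) = actW b \<phi> + actW b \<psi>"
  by (auto simp: actW_def fun_eq_iff)
lemma actW_mult: "actW b (\<lambda>x. c * \<phi> x) = (\<lambda>x. c * actW b \<phi> x)"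
  by (auto simp: actW_def fun_eq_iff)
lemma actW_comp: "actW b1 (actW b2 \<phi>) = actW (b2 \<circ> b1) \<phi>"
  by (auto simp: actW_def fun_eq_iff comp_assoc)
lemma actW_id: "actW id \<phi> = \<phi>"
  by (auto simp: actW_def fun_eq_iff)
lemma actW_0: "actW b (\<lambda>x. 0) = (\<lambda>x. 0)"
  by (auto simp: actW_def fun_eq_iff)
lemma actW_p: "\<phi> \<in> Wd \<Longrightarrow> iota (actW p \<phi>) = 0"
  by (auto simp: iota_def actW_def fun_eq_iff Wd_I I_p xs_B)


lemma Wp_sub: "VV.subspace Wp"
  unfolding VV.subspace_def
proof (intro conjI ballI allI)
  show "0 \<in> Wp" unfolding Wp_def using iota_0 Wd_0 by (metis image_eqI)
  fix u v assume "u \<in> Wp" "v \<in> Wp"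
  then obtain \<phi> \<psi> where "\<phi> \<in> Wd" "\<psi> \<in> Wd" "u = iota \<phi>" "v = iota \<psi>" by (auto simp: Wp_def)
  then show "u + v \<in> Wp" unfolding Wp_def using iota_add Wd_add by (metis image_eqI)
next
  fix c u assume "u \<in> Wp"
  then obtain \<phi> where "\<phi> \<in> Wd" "u = iota \<phi>" by (auto simp: Wp_def)
  then show "sV c u \<in> Wp" unfolding Wp_def using iota_scale Wd_scale by (metis image_eqI)
qed

definition eps :: "nat \<Rightarrow> nat \<Rightarrow> complex" where "eps k = (\<lambda>m. if m = k then 1 else 0)"

lemma Wp_span: "Wp \<subseteq> VV.span (eps ` {..<length xs})"
proof
  fix w assume "w \<in> Wp"
  then obtain \<phi> where w: "w = iota \<phi>" by (auto simp: Wp_def)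
  have "w = (\<Sum>k<length xs. sV (\<phi> (xs ! k)) (eps k))"
  proof
    fix m
    have "(\<Sum>k<length xs. sV (\<phi> (xs ! k)) (eps k)) m = (\<Sum>k<length xs. if k = m then \<phi> (xs ! k) else 0)"
      unfolding sum_fun_apply by (rule sum.cong) (auto simp: sV_def eps_def)
    also have "\<dots> = w m" by (simp add: w iota_def)
    finally show "w m = (\<Sum>k<length xs. sV (\<phi> (xs ! k)) (eps k)) m" by simp
  qed
  also have "\<dots> \<in> VV.span (eps ` {..<length xs})"
    by (intro VV.span_sum VV.span_scale VV.span_base) auto
  finally show "w \<in> VV.span (eps ` {..<length xs})" .
qed

definition Pmod where "Pmod U \<longleftrightarrow> VV.subspace U \<and> U \<subseteq> Wp \<and> (\<forall>b\<in>BB. \<forall>u\<in>U. betaW b u \<in> U) \<and> U \<noteq> {0}"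

lemma beta_Wp: "b \<in> BB \<Longrightarrow> w \<in> Wp \<Longrightarrow> betaW b w \<in> Wp"
  by (auto simp: Wp_def beta_eq actW_Wd)

lemma Pmod_Wp: "Pmod Wp"
proof -
  obtain \<phi>0 where \<phi>0: "Vector_Spaces.linear (sF sM) (*) \<phi>0" "\<phi>0 id = 1" "\<forall>x\<in>II. \<phi>0 x = 0"
    using phi0 by blast
  have W0: "\<phi>0 \<in> Wd" using \<phi>0 by (simp add: Wd_def)
  have "iota \<phi>0 \<noteq> 0"
  proof
    assume "iota \<phi>0 = 0"
    then have "iota \<phi>0 = iota (\<lambda>x. 0)" by (simp add: iota_0)
    then have "\<phi>0 id = 0" using lin_eq_on[OF W0 Wd_0 _ Bset_id] by simp
    then show False using \<phi>0(2) by simp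
  qed
  moreover have "iota \<phi>0 \<in> Wp" using W0 by (simp add: Wp_def)
  ultimately have "Wp \<noteq> {0}" by blast
  then show ?thesis using Wp_sub beta_Wp by (auto simp: Pmod_def)
qed

lemma contra: False
proof -
  obtain V where PV: "Pmod V" and Vmin': "\<forall>U. Pmod U \<longrightarrow> VV.dim V \<le> VV.dim U"
    using ex_has_least_nat[of Pmod Wp VV.dim, OF Pmod_Wp] by blast
  have Vmin: "VV.dim V \<le> VV.dim U" if "Pmod U" for U using Vmin' that by blast
  have Vsub: "VV.subspace V" and VW: "V \<subseteq> Wp" and Vcl: "\<forall>b\<in>BB. \<forall>u\<in>V. betaW b u \<in> V"
    and Vne: "V \<noteq> {0}" using PV by (auto simp: Pmod_def)
  have Vrep: "\<exists>\<phi>\<in>Wd. v = iota \<phi>" if "v \<in> V" for v using that VW by (auto simp: Wp_def)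
  have irr: "B_irreducible BB sV V betaW"
    unfolding B_irreducible_def
  proof (intro conjI allI impI Vne)
    fix W0 assume W0: "W0 \<subseteq> V \<and> VV.subspace W0 \<and> (\<forall>b\<in>BB. \<forall>w\<in>W0. betaW b w \<in> W0)"
    show "W0 = {0} \<or> W0 = V"
    proof (cases "W0 = {0}")
      case False
      then have "Pmod W0" using W0 VW by (auto simp: Pmod_def)
      then have "VV.dim V \<le> VV.dim W0" by (rule Vmin)
      then have "W0 = V"
        using VV.subspace_eq_dim[of W0 V "eps ` {..<length xs}"] W0 Vsub VW Wp_span by auto
      then show ?thesis by simp
    qed simp
  qed
  have comp: "\<forall>b1\<in>BB. \<forall>b2\<in>BB. \<forall>v\<in>V. betaW (b2 \<circ> b1) v = betaW b1 (betaW b2 v)"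
  proof (intro ballI)
    fix b1 b2 v assume b: "b1 \<in> BB" "b2 \<in> BB" and v: "v \<in> V"
    obtain \<phi> where \<phi>: "\<phi> \<in> Wd" "v = iota \<phi>" using Vrep[OF v] by blast
    show "betaW (b2 \<circ> b1) v = betaW b1 (betaW b2 v)"
      using \<phi> b by (simp add: beta_eq Bset_comp actW_Wd actW_comp)
  qed
  have lmod: "B_lmodule BB sM sV V betaW"
    unfolding B_lmodule_def
  proof (intro conjI ballI allI vsV Vsub)
    fix b v assume "b \<in> BB" "v \<in> V" then show "betaW b v \<in> V" using Vcl by blast
  next
    fix b1 b2 v assume b: "b1 \<in> BB" "b2 \<in> BB" and v: "v \<in> V"
    obtain \<phi> where \<phi>: "\<phi> \<in> Wd" "v = iota \<phi>" using Vrep[OF v] by blast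
    show "betaW (b1 + b2) v = betaW b1 v + betaW b2 v"
      using \<phi> b by (simp add: beta_eq Bset_add actW_add iota_add)
    show "betaW (b2 \<circ> b1) v = betaW b1 (betaW b2 v)"
      using \<phi> b by (simp add: beta_eq Bset_comp actW_Wd actW_comp)
  next
    fix c b v assume b: "b \<in> BB" and v: "v \<in> V"
    obtain \<phi> where \<phi>: "\<phi> \<in> Wd" "v = iota \<phi>" using Vrep[OF v] by blast
    show "betaW (sF sM c b) v = sV c (betaW b v)"
      using \<phi> b by (simp add: beta_eq Bset_scale actW_scale iota_scale)
    show "betaW b (sV c v) = sV c (betaW b v)"
      using \<phi> b by (simp add: beta_eq Wd_scale actW_mult iota_scale[symmetric])
  next
    fix b v w assume b: "b \<in> BB" and v: "v \<in> V" and w: "w \<in> V"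
    obtain \<phi> where \<phi>: "\<phi> \<in> Wd" "v = iota \<phi>" using Vrep[OF v] by blast
    obtain \<psi> where \<psi>: "\<psi> \<in> Wd" "w = iota \<psi>" using Vrep[OF w] by blast
    show "betaW b (v + w) = betaW b v + betaW b w"
      using \<phi> \<psi> b by (simp add: beta_eq Wd_add actW_plus iota_add[symmetric])
  next
    fix v assume v: "v \<in> V"
    obtain \<phi> where \<phi>: "\<phi> \<in> Wd" "v = iota \<phi>" using Vrep[OF v] by blast
    show "betaW id v = v" using \<phi> by (simp add: beta_eq Bset_id actW_id)
  qed
  have "quotient_of_Bp BB sM p sV V betaW"
    using gen[unfolded generating_def, rule_format, OF conjI[OF lmod irr]] .
  then obtain f where fq: "(\<forall>x\<in>{p \<circ> b | b. b \<in> BB}. \<forall>y\<in>{p \<circ> b | b. b \<in> BB}. f (x + y) = f x + f y) \<and>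
          (\<forall>c. \<forall>x\<in>{p \<circ> b | b. b \<in> BB}. f (sF sM c x) = sV c (f x)) \<and>
          (\<forall>b'\<in>BB. \<forall>x\<in>{p \<circ> b | b. b \<in> BB}. f (x \<circ> b') = betaW b' (f x)) \<and>
          f ` {p \<circ> b | b. b \<in> BB} = V"
    unfolding quotient_of_Bp_def by (rule exE)
  have f: "\<forall>b'\<in>BB. \<forall>x\<in>{p \<circ> b | b. b \<in> BB}. f (x \<circ> b') = betaW b' (f x)"
    "f ` {p \<circ> b | b. b \<in> BB} = V"
    using fq by (rule conjunct1[OF conjunct2[OF conjunct2]], rule conjunct2[OF conjunct2[OF conjunct2]])
  have kill: "betaW p v = 0" if v: "v \<in> V" for v
  proof -
    obtain \<phi> where \<phi>: "\<phi> \<in> Wd" "v = iota \<phi>" using Vrep[OF v] by blast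
    show ?thesis using \<phi> by (simp add: beta_eq pB actW_p)
  qed
  have b0: "betaW b 0 = 0" if "b \<in> BB" for b
    using beta_eq[OF Wd_0 that] by (simp add: iota_0 actW_0)
  have pin: "p \<in> {p \<circ> b | b. b \<in> BB}" by (intro CollectI exI[of _ id] conjI) (simp_all add: Bset_id)
  have "V \<subseteq> {0}"
  proof
    fix v assume "v \<in> V"
    then obtain b where b: "b \<in> BB" "v = f (p \<circ> b)" using f(2) by blast
    have fp: "f p \<in> V" using f(2) pin by blast
    have pb: "p \<circ> b \<in> BB" using Bset_comp[OF pB b(1)] .
    have "f (p \<circ> b) = f (p \<circ> (p \<circ> b))" using pp by (simp add: comp_assoc[symmetric])
    also have "\<dots> = betaW (p \<circ> b) (f p)" using f(1)[rule_format, OF pb pin] .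
    also have "\<dots> = betaW b (betaW p (f p))"
      using comp[rule_format, OF b(1) pB fp] .
    also have "\<dots> = 0" using kill[OF fp] b0[OF b(1)] by simp
    finally show "v \<in> {0}" using b by simp
  qed
  then show False using Vne VV.subspace_0[OF Vsub] by blast
qed

end

context partB
begin

lemma id_in: "id \<in> II"
proof (rule ccontr)
  assume "id \<notin> II"
  then interpret partB_neg sA sM act p by unfold_locales
  show False by (rule contra)
qed

lemma decomp: "\<exists>(K :: ('m \<Rightarrow> 'm) set) bk ck. finite K \<and> (\<forall>k. bk k \<in> BB) \<and> (\<forall>k. ck k \<in> BB) \<and>
   (\<forall>\<xi>. (\<Sum>k\<in>K. ck k (p (bk k \<xi>))) = \<xi>)"
proof -
  have "id \<in> {\<Sum>a\<in>t. sF sM (r a) a | t r. finite t \<and> t \<subseteq> Gen}"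
    using id_in unfolding II_def FS.span_explicit .
  then obtain t r where tr: "finite t" "t \<subseteq> Gen" "id = (\<Sum>a\<in>t. sF sM (r a) a)"
    by blast
  define bk where "bk = (\<lambda>v. if v \<in> Gen then (SOME b. b \<in> BB \<and> (\<exists>c\<in>BB. v = c \<circ> p \<circ> b)) else id)"
  define c0 where "c0 = (\<lambda>v. SOME c. c \<in> BB \<and> v = c \<circ> p \<circ> bk v)"
  define ck where "ck = (\<lambda>v. if v \<in> Gen then sF sM (r v) (c0 v) else id)"
  have G: "bk v \<in> BB \<and> c0 v \<in> BB \<and> v = c0 v \<circ> p \<circ> bk v" if "v \<in> Gen" for v
  proof -
    have "\<exists>b. b \<in> BB \<and> (\<exists>c\<in>BB. v = c \<circ> p \<circ> b)" using that by (auto simp: Gen_def)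
    then have b0: "(SOME b. b \<in> BB \<and> (\<exists>c\<in>BB. v = c \<circ> p \<circ> b)) \<in> BB \<and>
        (\<exists>c\<in>BB. v = c \<circ> p \<circ> (SOME b. b \<in> BB \<and> (\<exists>c\<in>BB. v = c \<circ> p \<circ> b)))"
      by (rule someI_ex)
    have "bk v = (SOME b. b \<in> BB \<and> (\<exists>c\<in>BB. v = c \<circ> p \<circ> b))" using that by (simp add: bk_def)
    then have b: "bk v \<in> BB \<and> (\<exists>c\<in>BB. v = c \<circ> p \<circ> bk v)" using b0 by simp
    then have "\<exists>c. c \<in> BB \<and> v = c \<circ> p \<circ> bk v" by blast
    then have "c0 v \<in> BB \<and> v = c0 v \<circ> p \<circ> bk v" unfolding c0_def by (rule someI_ex)
    then show ?thesis using b by blast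
  qed
  have bkB: "bk k \<in> BB" for k using G[of k] Bset_id by (cases "k \<in> Gen") (auto simp: bk_def)
  have ckB: "ck k \<in> BB" for k using G[of k] Bset_id Bset_scale by (cases "k \<in> Gen") (auto simp: ck_def)
  have "(\<Sum>k\<in>t. ck k (p (bk k \<xi>))) = \<xi>" for \<xi>
  proof -
    have "(\<Sum>k\<in>t. ck k (p (bk k \<xi>))) = (\<Sum>k\<in>t. sM (r k) (k \<xi>))"
    proof (rule sum.cong[OF refl])
      fix k assume "k \<in> t"
      then have k: "k \<in> Gen" using tr(2) by blast
      have "k \<xi> = c0 k (p (bk k \<xi>))" using G[OF k] by (metis comp_apply)
      then show "ck k (p (bk k \<xi>)) = sM (r k) (k \<xi>)" using k by (simp add: ck_def sF_def)
    qed
    also have "\<dots> = (\<Sum>a\<in>t. sF sM (r a) a) \<xi>" by (simp add: sum_fun_apply sF_def)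
    also have "\<dots> = \<xi>" using tr(3) by (metis id_apply)
    finally show ?thesis .
  qed
  then show ?thesis using tr(1) bkB ckB by blast
qed

end



context partA
begin

lemma main:
  "(\<forall>S\<in>End0_C sM act UNIV (Bset sM act).
            restrict_to (range p) S \<in> End0_C sM act (range p) (pBp sM act p))
     \<and> (\<forall>S1\<in>End0_C sM act UNIV (Bset sM act). \<forall>S2\<in>End0_C sM act UNIV (Bset sM act).
            restrict_to (range p) (S1 + S2) = restrict_to (range p) S1 + restrict_to (range p) S2)
     \<and> (\<forall>c. \<forall>S\<in>End0_C sM act UNIV (Bset sM act).
            restrict_to (range p) (sF sM c S) = sF sM c (restrict_to (range p) S))
     \<and> bij_betw (restrict_to (range p)) (End0_C sM act UNIV (Bset sM act))
                 (End0_C sM act (range p) (pBp sM act p))"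
proof (intro conjI ballI allI)
  show "restrict_to N S \<in> End0_C sM act N (pBp sM act p)" if "S \<in> End0_C sM act UNIV BB" for S
    using restr_in[OF that] .
  show "restrict_to N (S1 + S2) = restrict_to N S1 + restrict_to N S2" for S1 S2
    by (auto simp: restrict_to_def fun_eq_iff)
  show "restrict_to N (sF sM c S) = sF sM c (restrict_to N S)" for c S
    by (auto simp: restrict_to_def fun_eq_iff sF_def)
  show "bij_betw (restrict_to N) (End0_C sM act UNIV BB) (End0_C sM act N (pBp sM act p))"
    unfolding bij_betw_def
  proof
    show "inj_on (restrict_to N) (End0_C sM act UNIV BB)" by (rule restr_inj)
    show "restrict_to N ` End0_C sM act UNIV BB = End0_C sM act N (pBp sM act p)"
      using restr_in restr_surj by blast
  qed
qed

end

theorem proposition11p5: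
  fixes sA :: "complex \<Rightarrow> 'a::ring \<Rightarrow> 'a"
    and sM :: "complex \<Rightarrow> 'm::ab_group_add \<Rightarrow> 'm"
    and act :: "'a \<Rightarrow> 'm \<Rightarrow> 'm"
    and p :: "'m \<Rightarrow> 'm"
  assumes "cx_algebra sA" and "AUF sA"
    and "left_module sA sM act" and "coherent sM act"
    and "p \<in> Bset sM act" and "p \<circ> p = p"
    and "generating sM act p"
  shows "(\<forall>S\<in>End0_C sM act UNIV (Bset sM act).
            restrict_to (range p) S \<in> End0_C sM act (range p) (pBp sM act p))
     \<and> (\<forall>S1\<in>End0_C sM act UNIV (Bset sM act). \<forall>S2\<in>End0_C sM act UNIV (Bset sM act).
            restrict_to (range p) (S1 + S2) = restrict_to (range p) S1 + restrict_to (range p) S2)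
     \<and> (\<forall>c. \<forall>S\<in>End0_C sM act UNIV (Bset sM act).
            restrict_to (range p) (sF sM c S) = sF sM c (restrict_to (range p) S))
     \<and> bij_betw (restrict_to (range p)) (End0_C sM act UNIV (Bset sM act))
                 (End0_C sM act (range p) (pBp sM act p))"
proof -
  interpret partB sA sM act p
    by (intro partB.intro partC.intro vsM.intro partC_axioms.intro partB_axioms.intro assms)
  obtain K :: "('m \<Rightarrow> 'm) set" and bk ck where K: "finite K" "\<forall>k. bk k \<in> Bset sM act"
    "\<forall>k. ck k \<in> Bset sM act" "\<forall>\<xi>. (\<Sum>k\<in>K. ck k (p (bk k \<xi>))) = \<xi>"
    using decomp by blast
  interpret pa: partA sA sM act p K bk ck
    by (intro partA.intro vsM.intro partA_axioms.intro assms K(1)) (use K in auto)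
  show ?thesis by (rule pa.main)
qed


end
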